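(* Let $m>2$ and $n>0$ be odd integers. Then $\mathcal{C}_m^n=\mathbf{Z}_m^n$.
   Context: $\mathbf{Z}_m$ denotes the integers modulo $m$. $T:\mathbf{Z}_m^n\to\mathbf{Z}_m^n$ is $T(a_0,\dots,a_{n-1})=(a_0+a_1,a_1+a_2,\dots,a_{n-1}+a_0)$. $\mathcal{C}_m^n$ is the set of tuples lying in a cycle of some sequence $(T^k\mathbf{b})_{k\ge0}$, i.e. the set of $\mathbf{a}\in\mathbf{Z}_m^n$ such that $T^P\mathbf{a}=\mathbf{a}$ for some positive integer $P$. *)

theory Defs
  imports Main
begin

definition Zmn :: "int \<Rightarrow> nat \<Rightarrow> int list set" where
  "Zmn m n = {a. length a = n \<and> (\<forall>x\<in>set a. 0 \<le> x \<and> x < m)}"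

definition ducciT :: "int \<Rightarrow> int list \<Rightarrow> int list" where
  "ducciT m a = map (\<lambda>i. (a ! i + a ! ((i + 1) mod length a)) mod m) [0..<length a]"

definition cycleSet :: "int \<Rightarrow> nat \<Rightarrow> int list set" where
  "cycleSet m n = {a \<in> Zmn m n. \<exists>P::nat. P > 0 \<and> (ducciT m ^^ P) a = a}"

end

theory Submission
  imports Defs
begin

lemma ducci_len: "length (ducciT m a) = length a"
  by (simp add: ducciT_def)

lemma ducci_nth: "i < length a \<Longrightarrow> ducciT m a ! i = (a ! i + a ! ((i + 1) mod length a)) mod m"
  by (simp add: ducciT_def)

lemma ducci_maps: assumes "m > 0" "a \<in> Zmn m n" shows "ducciT m a \<in> Zmn m n"
  using assms by (auto simp: Zmn_def ducciT_def)

lemma ducci_inj: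
  fixes m :: int and n :: nat
  assumes m: "m > 2" "odd m" and n: "n > 0" "odd n"
    and a: "a \<in> Zmn m n" and b: "b \<in> Zmn m n" and eq: "ducciT m a = ducciT m b"
  shows "a = b"
proof -
  have la: "length a = n" and lb: "length b = n" using a b by (auto simp: Zmn_def)
  define d where "d i = a ! i - b ! i" for i
  have step: "m dvd d i + d ((i + 1) mod n)" if "i < n" for i
  proof -
    have "ducciT m a ! i = ducciT m b ! i" using eq by simp
    hence "(a ! i + a ! ((i + 1) mod n)) mod m = (b ! i + b ! ((i + 1) mod n)) mod m"
      using that la lb by (simp add: ducci_nth)
    hence "m dvd (a ! i + a ! ((i + 1) mod n)) - (b ! i + b ! ((i + 1) mod n))"
      by (simp add: mod_eq_dvd_iff)
    thus ?thesis by (simp add: d_def algebra_simps)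
  qed
  have alt: "i < n \<Longrightarrow> m dvd d i - (-1) ^ i * d 0" for i
  proof (induction i)
    case 0 then show ?case by simp
  next
    case (Suc i)
    have s: "m dvd d i + d (Suc i)" using step[of i] Suc.prems by simp
    have ih: "m dvd d i - (-1) ^ i * d 0" using Suc by simp
    have "d (Suc i) - (-1) ^ Suc i * d 0 = (d i + d (Suc i)) - (d i - (-1) ^ i * d 0)"
      by simp
    thus ?case using dvd_diff[OF s ih] by simp
  qed
  obtain k where k: "n = Suc k" using n by (cases n) auto
  have ek: "even k" using n k by simp
  have h1: "m dvd d k - d 0" using alt[of k] k ek by simp
  have h2: "m dvd d k + d 0" using step[of k] k by simp
  have "2 * d 0 = (d k + d 0) - (d k - d 0)" by simp
  hence "m dvd 2 * d 0" using dvd_diff[OF h2 h1] by simp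
  moreover have "coprime m 2" using m by simp
  ultimately have d0: "m dvd d 0" by (metis coprime_dvd_mult_right_iff)
  have "d i = 0" if "i < n" for i
  proof -
    have x1: "m dvd (-1) ^ i * d 0" using d0 by (rule dvd_mult)
    have "d i = (d i - (-1) ^ i * d 0) + (-1) ^ i * d 0" by simp
    hence "m dvd d i" using dvd_add[OF alt[OF that] x1] by simp
    moreover have "a ! i \<in> set a" "b ! i \<in> set b" using that la lb by auto
    hence "0 \<le> a ! i" "a ! i < m" "0 \<le> b ! i" "b ! i < m" using a b by (auto simp: Zmn_def)
    hence "\<bar>d i\<bar> < m" by (simp add: d_def abs_less_iff)
    show ?thesis
    proof (rule ccontr)
      assume "d i \<noteq> 0"
      hence "\<bar>m\<bar> \<le> \<bar>d i\<bar>" using \<open>m dvd d i\<close> by (rule dvd_imp_le_int)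
      thus False using \<open>\<bar>d i\<bar> < m\<close> by linarith
    qed
  qed
  hence "\<And>i. i < length a \<Longrightarrow> a ! i = b ! i" using la unfolding d_def by simp
  thus ?thesis using la lb by (intro nth_equalityI) simp_all
qed

theorem proposition6p1:
  fixes m :: int and n :: nat
  assumes "m > 2" and "odd m" and "n > 0" and "odd n"
  shows "cycleSet m n = Zmn m n"
proof
  show "cycleSet m n \<subseteq> Zmn m n" by (auto simp: cycleSet_def)
next
  let ?A = "Zmn m n" and ?f = "ducciT m"
  have m0: "m > 0" using assms by simp
  have maps: "(?f ^^ k) x \<in> ?A" if "x \<in> ?A" for k x
    using that by (induction k) (auto intro: ducci_maps[OF m0])
  have injk: "inj_on (?f ^^ k) ?A" for k
  proof (induction k)
    case 0 then show ?case by simp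
  next
    case (Suc k)
    show ?case
    proof (rule inj_onI)
      fix x y assume x: "x \<in> ?A" and y: "y \<in> ?A" and e: "(?f ^^ Suc k) x = (?f ^^ Suc k) y"
      have "(?f ^^ k) x = (?f ^^ k) y"
        using ducci_inj[OF assms maps[OF x] maps[OF y]] e by simp
      thus "x = y" using Suc.IH x y by (meson inj_onD)
    qed
  qed
  have fin: "finite ?A"
  proof -
    have "?A \<subseteq> {xs. set xs \<subseteq> {0..<m} \<and> length xs = n}" by (auto simp: Zmn_def)
    moreover have "finite {xs. set xs \<subseteq> {0..<m} \<and> length xs = n}"
      by (rule finite_lists_length_eq) simp
    ultimately show ?thesis by (rule finite_subset)
  qed
  show "?A \<subseteq> cycleSet m n"
  proof
    fix a assume a: "a \<in> ?A"
    define g where "g k = (?f ^^ k) a" for k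
    define N where "N = card ?A"
    have sub: "g ` {0..N} \<subseteq> ?A" unfolding g_def using maps[OF a] by blast
    have c1: "card (g ` {0..N}) \<le> N" unfolding N_def by (rule card_mono[OF fin sub[unfolded N_def]])
    have "\<not> inj_on g {0..N}"
    proof
      assume "inj_on g {0..N}"
      hence "card (g ` {0..N}) = Suc N" by (simp add: card_image)
      thus False using c1 by simp
    qed
    then obtain i j where ij: "i \<in> {0..N}" "j \<in> {0..N}" "i \<noteq> j" "g i = g j"
      unfolding inj_on_def by blast
    have "\<exists>i j. i < j \<and> g i = g j"
    proof (cases "i < j")
      case True then show ?thesis using ij by blast
    next
      case False then have "j < i" using ij(3) by simp
      then show ?thesis using ij(4) by metis
    qed
    then obtain i j where ij2: "i < j" "g i = g j" by blast
    have jj: "j = i + (j - i)" using ij2 by simp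
    have "(?f ^^ i) ((?f ^^ (j - i)) a) = (?f ^^ j) a"
      by (subst (2) jj) (simp only: funpow_add comp_apply)
    also have "\<dots> = (?f ^^ i) a" using ij2(2) unfolding g_def by simp
    finally have e: "(?f ^^ i) ((?f ^^ (j - i)) a) = (?f ^^ i) a" .
    have "(?f ^^ (j - i)) a = a"
      using inj_onD[OF injk[of i] e maps[OF a] a] .
    moreover have "j - i > 0" using ij2 by simp
    ultimately show "a \<in> cycleSet m n" using a unfolding cycleSet_def by blast
  qed
qed

end
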